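(* Let $P$ be a set of $n$ points in $\mathbb R$ and let $H$ be the hypergraph induced by $P$ with respect to intervals (vertex set $P$, hyperedges all nonempty sets $I\cap P$ with $I$ an interval). Then $\mathrm{ch}_{um}(H)\le\log_2 n+1$.
   Context: A coloring $C\colon V\to\mathbb Z_{>0}$ of a hypergraph is unique-maximum if in every hyperedge the maximum color is attained by exactly one vertex. The um-choice number $\mathrm{ch}_{um}(H)$ is the minimum $k$ such that for every family $\{L_v\}_{v\in V}$ of sets of positive integers with $|L_v|\ge k$ there is a unique-maximum coloring $C$ with $C(v)\in L_v$ for all $v$. *)

theory Defs
  imports Complex_Main
begin

text \<open>A hypergraph is given by its vertex set V and its set H of hyperedges.
  A colouring uses positive integers (here naturals; positivity is enforced by the lists).\<close>

definition um_coloring :: "'a set set \<Rightarrow> ('a \<Rightarrow> nat) \<Rightarrow> bool" where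
  "um_coloring H C \<longleftrightarrow> (\<forall>E\<in>H. \<exists>!v. v \<in> E \<and> C v = Max (C ` E))"

text \<open>List sizes: an infinite list counts as having size at least k.\<close>
definition ch_um :: "'a set \<Rightarrow> 'a set set \<Rightarrow> nat" where
  "ch_um V H = (LEAST k. \<forall>L :: 'a \<Rightarrow> nat set.
      (\<forall>v\<in>V. L v \<subseteq> {0<..} \<and> (finite (L v) \<longrightarrow> k \<le> card (L v))) \<longrightarrow>
      (\<exists>C. (\<forall>v\<in>V. C v \<in> L v) \<and> um_coloring H C))"

definition real_interval :: "real set \<Rightarrow> bool" where
  "real_interval I \<longleftrightarrow> (\<forall>x z y. x \<in> I \<longrightarrow> z \<in> I \<longrightarrow> x \<le> y \<longrightarrow> y \<le> z \<longrightarrow> y \<in> I)"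

definition interval_hyperedges :: "real set \<Rightarrow> real set set" where
  "interval_hyperedges P = {E. E \<noteq> {} \<and> (\<exists>I. real_interval I \<and> E = I \<inter> P)}"

end

theory Submission
  imports Defs
begin

lemma key:
  fixes P :: "real set" and L :: "real \<Rightarrow> nat set"
  assumes "finite P" "\<forall>v\<in>P. finite (L v)" "(\<Sum>v\<in>P. (1/2::real)^card (L v)) < 1"
  shows "\<exists>C. (\<forall>v\<in>P. C v \<in> L v) \<and> um_coloring (interval_hyperedges P) C"
  using assms
proof (induction "card P" arbitrary: P L rule: less_induct)
  case less
  show ?case
  proof (cases "P = {}")
    case True
    then have "interval_hyperedges P = {}" by (auto simp: interval_hyperedges_def)
    then show ?thesis using True by (auto simp: um_coloring_def)
  next
    case False
    define w where "w u = (1/2::real)^card (L u)" for u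
    have w_nonneg: "\<And>u. 0 \<le> w u" by (simp add: w_def)
    have Phi: "sum w P < 1" using less.prems w_def by simp
    have Lne: "L v \<noteq> {}" if "v\<in>P" for v
    proof
      assume "L v = {}"
      hence "w v = 1" by (simp add: w_def)
      moreover have "w v \<le> sum w P" using member_le_sum[of v P w] that w_nonneg less.prems(1) by auto
      ultimately show False using Phi by simp
    qed
    define U where "U = \<Union>(L ` P)"
    have Ufin: "finite U" using less.prems U_def by auto
    have Une: "U \<noteq> {}" using False Lne U_def by auto
    define m where "m = Max U"
    have m_ge: "x \<le> m" if "v\<in>P" "x \<in> L v" for v x using Ufin that U_def m_def by (metis Max_ge UN_I)
    have "m \<in> U" using Ufin Une m_def Max_in by auto
    define S where "S = {v\<in>P. m \<in> L v}"
    have Sne: "S \<noteq> {}" using \<open>m \<in> U\<close> U_def S_def by auto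
    have Sfin: "finite S" using less.prems S_def by auto
    have SP: "S \<subseteq> P" using S_def by auto
    define L' where "L' u = L u - {m}" for u
    define w' where "w' u = (1/2::real)^card (L' u)" for u
    have w'S: "w' u = 2 * w u" if "u \<in> S" for u
    proof -
      have fin: "finite (L u)" using that less.prems S_def by auto
      have c: "card (L' u) = card (L u) - 1" using that fin S_def L'_def by auto
      have "card (L u) \<ge> 1" using that fin S_def by (metis (mono_tags, lifting) Lne One_nat_def Suc_leI card_gt_0_iff mem_Collect_eq)
      then obtain c' where "card (L u) = Suc c'" using not0_implies_Suc by fastforce
      then show ?thesis using c by (simp add: w'_def w_def)
    qed
    have w'nS: "w' u = w u" if "u\<in>P" "u \<notin> S" for u
      using that by (simp add: w'_def w_def L'_def S_def)
    have w'_nonneg: "\<And>u. 0 \<le> w' u" by (simp add: w'_def)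
    define s1 where "s1 = Min S"
    define G where "G = {s\<in>S. (\<Sum>u\<in>{u\<in>P. u<s}. w' u) < 1}"
    have "s1 \<in> G"
    proof -
      have "s1 \<in> S" using Sfin Sne s1_def Min_in by auto
      have "(\<Sum>u\<in>{u\<in>P. u<s1}. w' u) = (\<Sum>u\<in>{u\<in>P. u<s1}. w u)"
      proof (rule sum.cong)
        fix u assume "u \<in> {u\<in>P. u<s1}"
        then have "u \<notin> S" "u \<in> P" using Sfin s1_def Min_le by fastforce+
        then show "w' u = w u" using w'nS by auto
      qed simp
      also have "\<dots> \<le> sum w P" using less.prems(1) w_nonneg by (intro sum_mono2) auto
      finally show ?thesis using Phi \<open>s1 \<in> S\<close> G_def by auto
    qed
    have Gfin: "finite G" using Sfin G_def by auto
    define s where "s = Max G"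
    have sG: "s \<in> G" using Gfin \<open>s1 \<in> G\<close> s_def Max_in by blast
    then have sS: "s \<in> S" and left: "(\<Sum>u\<in>{u\<in>P. u<s}. w' u) < 1" using G_def by auto
    have sP: "s \<in> P" using sS SP by auto
    have right: "(\<Sum>u\<in>{u\<in>P. s<u}. w' u) < 1"
    proof (rule ccontr)
      assume R: "\<not> (\<Sum>u\<in>{u\<in>P. s<u}. w' u) < 1"
      show False
      proof (cases "\<exists>t\<in>S. s < t")
        case False
        have "(\<Sum>u\<in>{u\<in>P. s<u}. w' u) = (\<Sum>u\<in>{u\<in>P. s<u}. w u)"
          using False w'nS by (intro sum.cong) auto
        also have "\<dots> \<le> sum w P" using less.prems(1) w_nonneg by (intro sum_mono2) auto
        finally show False using R Phi by simp
      next
        case True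
        define T where "T = {t\<in>S. s<t}"
        have Tfin: "finite T" "T \<noteq> {}" using Sfin True T_def by auto
        define t where "t = Min T"
        have tT: "t \<in> T" using Tfin t_def Min_in by blast
        have tmin: "t \<le> u" if "u \<in> S" "s < u" for u using that Tfin t_def T_def by auto
        have "t \<notin> G"
        proof
          assume "t \<in> G"
          then have "t \<le> s" using Gfin s_def by auto
          then show False using tT T_def by auto
        qed
        then have lt: "(\<Sum>u\<in>{u\<in>P. u<t}. w' u) \<ge> 1" using tT T_def G_def by auto
        have "(\<Sum>u\<in>{u\<in>P. u<t}. w' u) + (\<Sum>u\<in>{u\<in>P. s<u}. w' u)
            = (\<Sum>u\<in>P. (if u<t then w' u else 0) + (if s<u then w' u else 0))"
          using less.prems(1) by (simp add: sum.inter_filter sum.distrib)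
        also have "\<dots> \<le> (\<Sum>u\<in>P. 2 * w u)"
        proof (rule sum_mono)
          fix u assume uP: "u \<in> P"
          show "(if u<t then w' u else 0) + (if s<u then w' u else 0) \<le> 2 * w u"
          proof (cases "u \<in> S")
            case True
            then have "\<not> (u < t \<and> s < u)" using tmin by force
            then show ?thesis using w'S[OF True] w_nonneg[of u] by auto
          next
            case False
            then show ?thesis using w'nS[OF uP False] w_nonneg[of u] by auto
          qed
        qed
        also have "\<dots> < 2" using Phi by (simp add: sum_distrib_left[symmetric])
        finally show False using lt R by simp
      qed
    qed
    define A where "A = {u\<in>P. u<s}"
    define B where "B = {u\<in>P. s<u}"
    have cA: "card A < card P" using sP less.prems(1) A_def by (intro psubset_card_mono) auto
    have cB: "card B < card P" using sP less.prems(1) B_def by (intro psubset_card_mono) auto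
    obtain CA where CA: "\<forall>v\<in>A. CA v \<in> L' v" "um_coloring (interval_hyperedges A) CA"
      using less.hyps[OF cA, of L'] less.prems left A_def L'_def w'_def by auto
    obtain CB where CB: "\<forall>v\<in>B. CB v \<in> L' v" "um_coloring (interval_hyperedges B) CB"
      using less.hyps[OF cB, of L'] less.prems right B_def L'_def w'_def by auto
    define C where "C u = (if u < s then CA u else if s < u then CB u else m)" for u
    have CL': "C u \<in> L' u" if "u \<in> P" "u \<noteq> s" for u
      using that CA(1) CB(1) A_def B_def C_def by (cases "u < s") auto
    have Cless: "C u < m" if "u \<in> P" "u \<noteq> s" for u
      using CL'[OF that] m_ge[OF that(1)] L'_def by fastforce
    have Cs: "C s = m" by (simp add: C_def)
    have CinL: "\<forall>v\<in>P. C v \<in> L v"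
    proof
      fix v assume "v \<in> P"
      show "C v \<in> L v"
      proof (cases "v = s")
        case True then show ?thesis using Cs sS S_def by auto
      next
        case False then show ?thesis using CL'[OF \<open>v\<in>P\<close> False] L'_def by auto
      qed
    qed
    have "um_coloring (interval_hyperedges P) C"
      unfolding um_coloring_def
    proof
      fix E assume "E \<in> interval_hyperedges P"
      then obtain I where I: "real_interval I" "E = I \<inter> P" "E \<noteq> {}"
        by (auto simp: interval_hyperedges_def)
      have Efin: "finite E" using I less.prems(1) by auto
      show "\<exists>!v. v \<in> E \<and> C v = Max (C ` E)"
      proof (cases "s \<in> E")
        case True
        have "Max (C ` E) = m"
        proof (rule Max_eqI)
          show "finite (C ` E)" using Efin by auto
          show "m \<in> C ` E" using True Cs by force
          fix y assume "y \<in> C ` E"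
          then obtain u where "u \<in> E" "y = C u" by auto
          then show "y \<le> m" using Cless Cs I(2) by (cases "u = s") (auto intro: less_imp_le)
        qed
        then show ?thesis using True Cs Cless I(2)
          by (metis Int_iff less_irrefl)
      next
        case False
        have side: "(\<forall>x\<in>E. x<s) \<or> (\<forall>x\<in>E. s<x)"
        proof (rule ccontr)
          assume "\<not> ?thesis"
          then obtain x y where "x \<in> E" "y \<in> E" "\<not> x < s" "\<not> s < y" by auto
          moreover have "x \<noteq> s" "y \<noteq> s" using False \<open>x\<in>E\<close> \<open>y\<in>E\<close> by auto
          ultimately have "y < s" "s < x" "y \<in> I" "x \<in> I" using I(2) by auto
          then have "s \<in> I" using I(1) unfolding real_interval_def by (meson less_imp_le)
          then show False using False sP I(2) by auto
        qed
        then show ?thesis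
        proof
          assume all: "\<forall>x\<in>E. x<s"
          have "E \<in> interval_hyperedges A"
            using I all A_def unfolding interval_hyperedges_def by auto
          then have u: "\<exists>!v. v \<in> E \<and> CA v = Max (CA ` E)" using CA(2) unfolding um_coloring_def by blast
          have eq: "\<forall>v\<in>E. C v = CA v" using all C_def by auto
          then have "C ` E = CA ` E" by auto
          then show ?thesis using u eq by (metis (no_types, lifting))
        next
          assume all: "\<forall>x\<in>E. s<x"
          have "E \<in> interval_hyperedges B"
            using I all B_def unfolding interval_hyperedges_def by auto
          then have u: "\<exists>!v. v \<in> E \<and> CB v = Max (CB ` E)" using CB(2) unfolding um_coloring_def by blast
          have eq: "\<forall>v\<in>E. C v = CB v" using all C_def by auto
          then have "C ` E = CB ` E" by auto
          then show ?thesis using u eq by (metis (no_types, lifting))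
        qed
      qed
    qed
    then show ?thesis using CinL by blast
  qed
qed


lemma pow_bound:
  fixes n :: nat
  shows "\<exists>k::nat. real n < 2^k \<and> real k \<le> log 2 (real n) + 1"
proof (cases "n = 0")
  case True then show ?thesis by (intro exI[of _ 0]) (auto simp: log_def)
next
  case False
  define k where "k = nat \<lfloor>log 2 (real n)\<rfloor> + 1"
  have lg: "log 2 (real n) \<ge> 0" using False by simp
  have rk: "real k = real_of_int \<lfloor>log 2 (real n)\<rfloor> + 1" using lg k_def by simp
  then have k1: "real k \<le> log 2 (real n) + 1" by linarith
  have "log 2 (real n) < real k" using rk by linarith
  then have "2 powr log 2 (real n) < 2 powr real k" by simp
  then have "real n < 2 ^ k" using False by (simp add: powr_realpow)
  then show ?thesis using k1 by blast
qed

theorem corollary3p5: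
  fixes P :: "real set" and n :: nat
  assumes "finite P" and "card P = n"
  shows "real (ch_um P (interval_hyperedges P)) \<le> log 2 (real n) + 1"
proof -
  obtain k :: nat where k: "real n < 2^k" "real k \<le> log 2 (real n) + 1" using pow_bound by blast
  have propk: "\<forall>L :: real \<Rightarrow> nat set.
      (\<forall>v\<in>P. L v \<subseteq> {0<..} \<and> (finite (L v) \<longrightarrow> k \<le> card (L v))) \<longrightarrow>
      (\<exists>C. (\<forall>v\<in>P. C v \<in> L v) \<and> um_coloring (interval_hyperedges P) C)"
  proof (intro allI impI)
    fix L :: "real \<Rightarrow> nat set"
    assume H: "\<forall>v\<in>P. L v \<subseteq> {0<..} \<and> (finite (L v) \<longrightarrow> k \<le> card (L v))"
    have ex: "\<exists>B. finite B \<and> card B = k \<and> B \<subseteq> L v" if vP: "v \<in> P" for v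
    proof (cases "finite (L v)")
      case True
      then have "k \<le> card (L v)" using H vP by blast
      then obtain B where B: "B \<subseteq> L v" "card B = k" by (rule obtain_subset_with_card_n)
      have "finite B" using True B(1) by (rule finite_subset[rotated])
      then show ?thesis using B by blast
    next
      case False
      then show ?thesis by (rule infinite_arbitrarily_large)
    qed
    then have "\<forall>v\<in>P. \<exists>B. finite B \<and> card B = k \<and> B \<subseteq> L v" by blast
    from bchoice[OF this] obtain L0 where L0a: "\<forall>v\<in>P. finite (L0 v) \<and> card (L0 v) = k \<and> L0 v \<subseteq> L v"
      by blast
    have L0: "finite (L0 v) \<and> card (L0 v) = k \<and> L0 v \<subseteq> L v" if "v \<in> P" for v using L0a that by blast
    have "(\<Sum>v\<in>P. (1/2::real)^card (L0 v)) = (\<Sum>v\<in>P. (1/2::real)^k)"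
      using L0 by (intro sum.cong) auto
    also have "\<dots> = real n / 2^k" using assms by (simp add: power_divide)
    also have "\<dots> < 1" using k(1) by simp
    finally have lt: "(\<Sum>v\<in>P. (1/2::real)^card (L0 v)) < 1" .
    have "\<forall>v\<in>P. finite (L0 v)" using L0 by blast
    from key[OF assms(1) this lt] obtain C where "\<forall>v\<in>P. C v \<in> L0 v" "um_coloring (interval_hyperedges P) C"
      by blast
    then show "\<exists>C. (\<forall>v\<in>P. C v \<in> L v) \<and> um_coloring (interval_hyperedges P) C"
      using L0 by blast
  qed
  have "ch_um P (interval_hyperedges P) \<le> k"
    unfolding ch_um_def by (rule Least_le) (rule propk)
  then show ?thesis using k(2) by linarith
qed

end
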